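(* Assume $|k|>r$, the characteristic of $k$ does not divide $r$, and $k$ contains a primitive $r$-th root of unity. Let $e,e'\in k\Sigma_r$ be Lie idempotents. Then $(k\mathrm{GL}_n(k),L^{n,r},ek\Sigma_re)$ satisfies Schur-Weyl duality if and only if $(k\mathrm{GL}_n(k),L^{n,r},e'k\Sigma_re')$ does.
   Context: $T^{n,r}=(k^n)^{\otimes r}$ with $\mathrm{GL}_n(k)$ acting on the left diagonally and $\Sigma_r$ on the right by place permutation $(v_1\otimes\cdots\otimes v_r)\cdot\sigma=v_{\sigma(1)}\otimes\cdots\otimes v_{\sigma(r)}$. $L^{n,r}=L(k^n)\cap T^{n,r}$, where $L(k^n)$ is the Lie subalgebra of the tensor algebra of $k^n$ generated by $k^n$ under $[a,b]=ab-ba$. A Lie idempotent is an idempotent $e\in k\Sigma_r$ with $L^{n,r}=T^{n,r}e$. A triple $(A,V,B)$ with $V$ an $(A,B)$-bimodule satisfies Schur-Weyl duality if the image of $A$ in $\operatorname{End}_k(V)$ equals $\operatorname{End}_B(V)$ and the image of $B$ equals $\operatorname{End}_A(V)$. *)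

theory Defs
  imports "HOL-Combinatorics.Permutations"
begin

text \<open>Tensors: an element of the tensor algebra of k^n is represented by its coefficient
function on words (lists of letters in {0..<n}); the word [i1,...,ir] stands for the
basis tensor e_i1 (x) ... (x) e_ir.\<close>

type_synonym 'k tensor = "nat list \<Rightarrow> 'k"

definition words :: "nat \<Rightarrow> nat \<Rightarrow> nat list set" where
  "words n r = {w. length w = r \<and> set w \<subseteq> {..<n}}"

definition Tnr :: "nat \<Rightarrow> nat \<Rightarrow> 'k::field tensor set" where
  "Tnr n r = {f. \<forall>w. f w \<noteq> 0 \<longrightarrow> w \<in> words n r}"

definition tadd :: "'k::field tensor \<Rightarrow> 'k tensor \<Rightarrow> 'k tensor" where
  "tadd f g = (\<lambda>w. f w + g w)"

definition tsmul :: "'k::field \<Rightarrow> 'k tensor \<Rightarrow> 'k tensor" where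
  "tsmul c f = (\<lambda>w. c * f w)"

definition tmul :: "'k::field tensor \<Rightarrow> 'k tensor \<Rightarrow> 'k tensor" where
  "tmul f g = (\<lambda>w. \<Sum>i\<le>length w. f (take i w) * g (drop i w))"

definition tbracket :: "'k::field tensor \<Rightarrow> 'k tensor \<Rightarrow> 'k tensor" where
  "tbracket f g = (\<lambda>w. tmul f g w - tmul g f w)"

inductive_set LieGen :: "nat \<Rightarrow> 'k::field tensor set" for n :: nat where
  gen: "(\<forall>w. f w \<noteq> 0 \<longrightarrow> w \<in> words n 1) \<Longrightarrow> f \<in> LieGen n"
| add: "f \<in> LieGen n \<Longrightarrow> g \<in> LieGen n \<Longrightarrow> tadd f g \<in> LieGen n"
| smul: "f \<in> LieGen n \<Longrightarrow> tsmul c f \<in> LieGen n"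
| brk: "f \<in> LieGen n \<Longrightarrow> g \<in> LieGen n \<Longrightarrow> tbracket f g \<in> LieGen n"

definition Lnr :: "nat \<Rightarrow> nat \<Rightarrow> 'k::field tensor set" where
  "Lnr n r = LieGen n \<inter> Tnr n r"

text \<open>Group algebra k Sigma_r: functions on permutations of {0..<r}; basis product
sigma * tau = sigma o tau.\<close>
definition perms :: "nat \<Rightarrow> (nat \<Rightarrow> nat) set" where
  "perms r = {\<sigma>. \<sigma> permutes {..<r}}"

definition grp_alg :: "nat \<Rightarrow> ((nat \<Rightarrow> nat) \<Rightarrow> 'k::field) set" where
  "grp_alg r = {a. \<forall>\<sigma>. a \<sigma> \<noteq> 0 \<longrightarrow> \<sigma> \<in> perms r}"

definition gprod :: "nat \<Rightarrow> ((nat \<Rightarrow> nat) \<Rightarrow> 'k::field) \<Rightarrow> ((nat \<Rightarrow> nat) \<Rightarrow> 'k) \<Rightarrow> ((nat \<Rightarrow> nat) \<Rightarrow> 'k)" where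
  "gprod r a b = (\<lambda>\<pi>. \<Sum>\<sigma>\<in>perms r. a \<sigma> * b (inv \<sigma> \<circ> \<pi>))"

definition permword :: "(nat \<Rightarrow> nat) \<Rightarrow> nat list \<Rightarrow> nat list" where
  "permword \<sigma> w = map (\<lambda>j. w ! \<sigma> j) [0..<length w]"

text \<open>Right action of k Sigma_r on tensors: e_w . sigma = e_{w . sigma}, so the coefficient
of u in f . sigma is f (u . sigma^{-1}).\<close>
definition tact :: "nat \<Rightarrow> 'k::field tensor \<Rightarrow> ((nat \<Rightarrow> nat) \<Rightarrow> 'k) \<Rightarrow> 'k tensor" where
  "tact r f a = (\<lambda>u. \<Sum>\<sigma>\<in>perms r. a \<sigma> * f (permword (inv \<sigma>) u))"

definition GL :: "nat \<Rightarrow> (nat \<Rightarrow> nat \<Rightarrow> 'k::field) set" where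
  "GL n = {g. (\<forall>i j. (n \<le> i \<or> n \<le> j) \<longrightarrow> g i j = 0) \<and>
     (\<exists>h. (\<forall>i j. (n \<le> i \<or> n \<le> j) \<longrightarrow> h i j = 0) \<and>
          (\<forall>i<n. \<forall>j<n. (\<Sum>l<n. g i l * h l j) = (if i = j then 1 else 0) \<and>
                       (\<Sum>l<n. h i l * g l j) = (if i = j then 1 else 0)))}"

text \<open>Diagonal left action: g e_j = sum_i g i j e_i, extended to tensor products.\<close>
definition gl_act :: "nat \<Rightarrow> (nat \<Rightarrow> nat \<Rightarrow> 'k::field) \<Rightarrow> 'k tensor \<Rightarrow> 'k tensor" where
  "gl_act n g f = (\<lambda>u. \<Sum>w\<in>words n (length u). (\<Prod>j<length u. g (u ! j) (w ! j)) * f w)"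

text \<open>Linear endomorphisms of a subspace V are represented by maps that vanish off V.\<close>
definition rest :: "'k::field tensor set \<Rightarrow> ('k tensor \<Rightarrow> 'k tensor) \<Rightarrow> ('k tensor \<Rightarrow> 'k tensor)" where
  "rest V \<phi> = (\<lambda>x. if x \<in> V then \<phi> x else (\<lambda>_. 0))"

definition lin_on :: "'k::field tensor set \<Rightarrow> ('k tensor \<Rightarrow> 'k tensor) \<Rightarrow> bool" where
  "lin_on V \<phi> \<longleftrightarrow> (\<forall>x\<in>V. \<forall>y\<in>V. \<phi> (tadd x y) = tadd (\<phi> x) (\<phi> y)) \<and>
                   (\<forall>c. \<forall>x\<in>V. \<phi> (tsmul c x) = tsmul c (\<phi> x))"

definition endo_comm :: "'k::field tensor set \<Rightarrow> ('k tensor \<Rightarrow> 'k tensor) set \<Rightarrow> ('k tensor \<Rightarrow> 'k tensor) set" where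
  "endo_comm V S = {\<phi>. \<phi> = rest V \<phi> \<and> \<phi> ` V \<subseteq> V \<and> lin_on V \<phi> \<and>
                       (\<forall>s\<in>S. \<forall>x\<in>V. \<phi> (s x) = s (\<phi> x))}"

definition imgGL :: "nat \<Rightarrow> 'k::field tensor set \<Rightarrow> ('k tensor \<Rightarrow> 'k tensor) set" where
  "imgGL n V = {rest V (\<lambda>x u. \<Sum>g\<in>F. c g * gl_act n g x u) | F c. finite F \<and> F \<subseteq> GL n}"

definition imgSym :: "nat \<Rightarrow> 'k::field tensor set \<Rightarrow> ((nat \<Rightarrow> nat) \<Rightarrow> 'k) set \<Rightarrow> ('k tensor \<Rightarrow> 'k tensor) set" where
  "imgSym r V B = {rest V (\<lambda>x. tact r x b) | b. b \<in> B}"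

definition schur_weyl :: "'k::field tensor set \<Rightarrow> ('k tensor \<Rightarrow> 'k tensor) set \<Rightarrow> ('k tensor \<Rightarrow> 'k tensor) set \<Rightarrow> bool" where
  "schur_weyl V IA IB \<longleftrightarrow> IA = endo_comm V IB \<and> IB = endo_comm V IA"

definition lie_idempotent :: "nat \<Rightarrow> nat \<Rightarrow> ((nat \<Rightarrow> nat) \<Rightarrow> 'k::field) \<Rightarrow> bool" where
  "lie_idempotent n r e \<longleftrightarrow> e \<in> grp_alg r \<and> gprod r e e = e \<and>
     Lnr n r = {tact r f e | f. f \<in> Tnr n r}"

definition corner :: "nat \<Rightarrow> ((nat \<Rightarrow> nat) \<Rightarrow> 'k::field) \<Rightarrow> ((nat \<Rightarrow> nat) \<Rightarrow> 'k) set" where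
  "corner r e = {gprod r (gprod r e a) e | a. a \<in> grp_alg r}"

definition SW_Lie :: "nat \<Rightarrow> nat \<Rightarrow> ((nat \<Rightarrow> nat) \<Rightarrow> 'k::field) \<Rightarrow> bool" where
  "SW_Lie n r e \<longleftrightarrow> schur_weyl (Lnr n r) (imgGL n (Lnr n r)) (imgSym r (Lnr n r) (corner r e))"

end

theory Submission
  imports Defs
begin

lemma pw_len[simp]: "length (permword \<sigma> w) = length w"
  by (simp add: permword_def)

lemma pw_nth: "j < length w \<Longrightarrow> permword \<sigma> w ! j = w ! \<sigma> j"
  by (simp add: permword_def)

lemma pw_comp:
  assumes "\<sigma> permutes {..<length w}"
  shows "permword \<sigma> (permword \<tau> w) = permword (\<tau> \<circ> \<sigma>) w"
proof (rule nth_equalityI)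
  show "length (permword \<sigma> (permword \<tau> w)) = length (permword (\<tau> \<circ> \<sigma>) w)" by simp
  fix j assume "j < length (permword \<sigma> (permword \<tau> w))"
  hence j: "j < length w" by simp
  have "\<sigma> j < length w" using permutes_in_image[OF assms] j by auto
  thus "permword \<sigma> (permword \<tau> w) ! j = permword (\<tau> \<circ> \<sigma>) w ! j"
    using j by (simp add: pw_nth)
qed

lemma inv_perm: "\<sigma> \<in> perms r \<Longrightarrow> inv \<sigma> \<in> perms r"
  by (simp add: perms_def permutes_inv)

lemma tact_Tnr:
  assumes f: "f \<in> Tnr n r"
  shows "tact r f a \<in> Tnr n r"
  unfolding Tnr_def mem_Collect_eq
proof (intro allI impI)
  fix u assume "tact r f a u \<noteq> 0"
  then obtain \<sigma> where s: "\<sigma> \<in> perms r" and nz: "f (permword (inv \<sigma>) u) \<noteq> 0"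
    unfolding tact_def by (metis (no_types, lifting) mult_zero_right sum.neutral)
  have w: "permword (inv \<sigma>) u \<in> words n r" using f nz unfolding Tnr_def by auto
  hence len: "length u = r" by (simp add: words_def)
  have sp: "\<sigma> permutes {..<r}" using s by (simp add: perms_def)
  have "set u \<subseteq> {..<n}"
  proof
    fix x assume "x \<in> set u"
    then obtain i where i: "i < r" "u ! i = x" using len by (auto simp: in_set_conv_nth)
    have si: "\<sigma> i < r" using permutes_in_image[OF sp] i by auto
    have "permword (inv \<sigma>) u ! (\<sigma> i) = u ! (inv \<sigma> (\<sigma> i))" using si len by (simp add: pw_nth)
    also have "\<dots> = x" using i permutes_inverses(2)[OF sp] by simp
    finally have "x \<in> set (permword (inv \<sigma>) u)" using si len
      by (metis nth_mem pw_len)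
    thus "x \<in> {..<n}" using w by (auto simp: words_def)
  qed
  thus "u \<in> words n r" using len by (simp add: words_def)
qed

lemma bij_left:
  assumes "\<sigma> \<in> perms r"
  shows "bij_betw (\<lambda>\<tau>. \<sigma> \<circ> \<tau>) (perms r) (perms r)"
proof (rule bij_betw_byWitness[where f' = "\<lambda>\<pi>. inv \<sigma> \<circ> \<pi>"])
  have sp: "\<sigma> permutes {..<r}" using assms by (simp add: perms_def)
  have b: "bij \<sigma>" using permutes_bij[OF sp] .
  show "\<forall>a\<in>perms r. inv \<sigma> \<circ> (\<sigma> \<circ> a) = a"
    using b by (simp add: o_assoc bij_is_inj inv_o_cancel)
  show "\<forall>a'\<in>perms r. \<sigma> \<circ> (inv \<sigma> \<circ> a') = a'"
    using b by (simp add: o_def bij_is_surj surj_f_inv_f)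
  show "(\<circ>) \<sigma> ` perms r \<subseteq> perms r"
    using sp by (auto simp: perms_def permutes_compose)
  show "(\<circ>) (inv \<sigma>) ` perms r \<subseteq> perms r"
    using sp by (auto simp: perms_def permutes_compose permutes_inv)
qed

lemma tact_tact:
  assumes f: "f \<in> Tnr n r"
  shows "tact r (tact r f a) b = tact r f (gprod r a b)"
proof
  fix u
  show "tact r (tact r f a) b u = tact r f (gprod r a b) u"
  proof (cases "length u = r")
    case False
    have z: "\<And>\<sigma>. f (permword \<sigma> u) = 0"
      using f False by (auto simp: Tnr_def words_def)
    have z2: "\<And>\<sigma> \<tau>. f (permword \<sigma> (permword \<tau> u)) = 0"
      using f False by (auto simp: Tnr_def words_def)
    show ?thesis by (simp add: tact_def z z2)
  next
    case True
    have "tact r (tact r f a) b u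
        = (\<Sum>\<tau>\<in>perms r. \<Sum>\<sigma>\<in>perms r. b \<tau> * a \<sigma> * f (permword (inv (\<sigma> \<circ> \<tau>)) u))"
    proof -
      have "\<And>\<tau> \<sigma>. \<tau> \<in> perms r \<Longrightarrow> \<sigma> \<in> perms r \<Longrightarrow>
          permword (inv \<sigma>) (permword (inv \<tau>) u) = permword (inv (\<sigma> \<circ> \<tau>)) u"
      proof -
        fix \<tau> \<sigma> assume t: "\<tau> \<in> perms r" and s: "\<sigma> \<in> perms r"
        have "inv \<sigma> permutes {..<length u}" using s True by (simp add: perms_def permutes_inv)
        hence "permword (inv \<sigma>) (permword (inv \<tau>) u) = permword (inv \<tau> \<circ> inv \<sigma>) u"
          by (rule pw_comp)
        also have "inv \<tau> \<circ> inv \<sigma> = inv (\<sigma> \<circ> \<tau>)"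
          using t s by (simp add: perms_def o_inv_distrib permutes_bij)
        finally show "permword (inv \<sigma>) (permword (inv \<tau>) u) = permword (inv (\<sigma> \<circ> \<tau>)) u" .
      qed
      thus ?thesis unfolding tact_def
        by (simp add: sum_distrib_left mult.assoc)
    qed
    also have "\<dots> = (\<Sum>\<sigma>\<in>perms r. \<Sum>\<tau>\<in>perms r. a \<sigma> * b \<tau> * f (permword (inv (\<sigma> \<circ> \<tau>)) u))"
      by (subst sum.swap) (simp add: mult.commute mult.left_commute)
    also have "\<dots> = (\<Sum>\<sigma>\<in>perms r. \<Sum>\<pi>\<in>perms r. a \<sigma> * b (inv \<sigma> \<circ> \<pi>) * f (permword (inv \<pi>) u))"
    proof (rule sum.cong[OF refl])
      fix \<sigma> assume s: "\<sigma> \<in> perms r"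
      have b: "bij \<sigma>" using s by (simp add: perms_def permutes_bij)
      have "(\<Sum>\<pi>\<in>perms r. a \<sigma> * b (inv \<sigma> \<circ> \<pi>) * f (permword (inv \<pi>) u))
          = (\<Sum>\<tau>\<in>perms r. a \<sigma> * b (inv \<sigma> \<circ> (\<sigma> \<circ> \<tau>)) * f (permword (inv (\<sigma> \<circ> \<tau>)) u))"
        using sum.reindex_bij_betw[OF bij_left[OF s], of "\<lambda>\<pi>. a \<sigma> * b (inv \<sigma> \<circ> \<pi>) * f (permword (inv \<pi>) u)"]
        by simp
      also have "\<dots> = (\<Sum>\<tau>\<in>perms r. a \<sigma> * b \<tau> * f (permword (inv (\<sigma> \<circ> \<tau>)) u))"
        using b by (simp add: o_assoc bij_is_inj inv_o_cancel)
      finally show "(\<Sum>\<tau>\<in>perms r. a \<sigma> * b \<tau> * f (permword (inv (\<sigma> \<circ> \<tau>)) u))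
          = (\<Sum>\<pi>\<in>perms r. a \<sigma> * b (inv \<sigma> \<circ> \<pi>) * f (permword (inv \<pi>) u))" by simp
    qed
    also have "\<dots> = tact r f (gprod r a b) u"
      unfolding tact_def gprod_def
      by (subst sum.swap) (simp add: sum_distrib_right)
    finally show ?thesis .
  qed
qed

lemma gprod_grp:
  assumes "b \<in> grp_alg r"
  shows "gprod r a b \<in> grp_alg r"
  unfolding grp_alg_def mem_Collect_eq
proof (intro allI impI)
  fix \<pi> assume "gprod r a b \<pi> \<noteq> 0"
  then obtain \<sigma> where s: "\<sigma> \<in> perms r" and nz: "b (inv \<sigma> \<circ> \<pi>) \<noteq> 0"
    unfolding gprod_def by (metis (no_types, lifting) mult_zero_right sum.neutral)
  have "inv \<sigma> \<circ> \<pi> \<in> perms r" using assms nz by (auto simp: grp_alg_def)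
  hence "\<sigma> \<circ> (inv \<sigma> \<circ> \<pi>) \<in> perms r"
    using s by (auto simp: perms_def permutes_compose)
  moreover have "\<sigma> \<circ> (inv \<sigma> \<circ> \<pi>) = \<pi>"
    using s by (simp add: perms_def o_def permutes_bij bij_is_surj surj_f_inv_f)
  ultimately show "\<pi> \<in> perms r" by simp
qed

lemma L_fix:
  assumes "lie_idempotent n r e" and "x \<in> Lnr n r"
  shows "tact r x e = x"
proof -
  from assms obtain f where f: "f \<in> Tnr n r" "x = tact r f e"
    by (auto simp: lie_idempotent_def)
  have "tact r x e = tact r f (gprod r e e)" using f tact_tact[OF f(1), of e e] by simp
  thus ?thesis using assms(1) f by (simp add: lie_idempotent_def)
qed

lemma L_T: "x \<in> Lnr n r \<Longrightarrow> x \<in> Tnr n r"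
  by (simp add: Lnr_def)

lemma img_sub:
  assumes e: "lie_idempotent n r e" and e': "lie_idempotent n r e'"
  shows "imgSym r (Lnr n r) (corner r e) \<subseteq> imgSym r (Lnr n r) (corner r e')"
proof
  fix \<phi> assume "\<phi> \<in> imgSym r (Lnr n r) (corner r e)"
  then obtain a where a: "a \<in> grp_alg r"
    and phi: "\<phi> = rest (Lnr n r) (\<lambda>x. tact r x (gprod r (gprod r e a) e))"
    by (auto simp: imgSym_def corner_def)
  have eg: "e \<in> grp_alg r" using e by (simp add: lie_idempotent_def)
  define b where "b = gprod r a e"
  have bg: "b \<in> grp_alg r" using gprod_grp[OF eg] by (simp add: b_def)
  have "rest (Lnr n r) (\<lambda>x. tact r x (gprod r (gprod r e' b) e'))
      = rest (Lnr n r) (\<lambda>x. tact r x (gprod r (gprod r e a) e))"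
    unfolding rest_def
  proof (rule ext)
    fix x
    show "(if x \<in> Lnr n r then tact r x (gprod r (gprod r e' b) e') else (\<lambda>_. 0)) =
          (if x \<in> Lnr n r then tact r x (gprod r (gprod r e a) e) else (\<lambda>_. 0))"
    proof (cases "x \<in> Lnr n r")
      case True
      have xT: "x \<in> Tnr n r" using True by (rule L_T)
      have xa: "tact r x a \<in> Tnr n r" using tact_Tnr[OF xT] .
      have xe: "tact r x e = x" using L_fix[OF e True] .
      have xe': "tact r x e' = x" using L_fix[OF e' True] .
      have l1: "tact r x (gprod r (gprod r e a) e) = tact r (tact r x a) e"
      proof -
        have "tact r x (gprod r (gprod r e a) e) = tact r (tact r x (gprod r e a)) e"
          using tact_tact[OF xT, of "gprod r e a" e] by simp
        also have "tact r x (gprod r e a) = tact r (tact r x e) a"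
          using tact_tact[OF xT, of e a] by simp
        finally show ?thesis using xe by simp
      qed
      have Leq: "Lnr n r = {tact r f e | f. f \<in> Tnr n r}"
        using e by (simp add: lie_idempotent_def)
      have y: "tact r (tact r x a) e \<in> Lnr n r"
        unfolding Leq using xa by blast
      have "tact r x (gprod r (gprod r e' b) e') = tact r (tact r x (gprod r e' b)) e'"
        using tact_tact[OF xT, of "gprod r e' b" e'] by simp
      also have "tact r x (gprod r e' b) = tact r (tact r x e') b"
        using tact_tact[OF xT, of e' b] by simp
      also have "\<dots> = tact r x b" using xe' by simp
      also have "\<dots> = tact r (tact r x a) e"
        unfolding b_def using tact_tact[OF xT, of a e] by simp
      finally have "tact r x (gprod r (gprod r e' b) e') = tact r (tact r (tact r x a) e) e'" .
      also have "\<dots> = tact r (tact r x a) e" using L_fix[OF e' y] .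
      finally have eq: "tact r x (gprod r (gprod r e' b) e') = tact r x (gprod r (gprod r e a) e)"
        using l1 by simp
      show ?thesis using eq True by simp
    qed simp
  qed
  moreover have c: "gprod r (gprod r e' b) e' \<in> corner r e'"
    unfolding corner_def using bg by blast
  ultimately have "\<phi> = rest (Lnr n r) (\<lambda>x. tact r x (gprod r (gprod r e' b) e'))"
    using phi by simp
  thus "\<phi> \<in> imgSym r (Lnr n r) (corner r e')"
    unfolding imgSym_def using c by blast
qed

theorem mainTheorem9:
  fixes n r :: nat and e e' :: "(nat \<Rightarrow> nat) \<Rightarrow> 'k::field"
  assumes "infinite (UNIV :: 'k set) \<or> r < card (UNIV :: 'k set)"
    and "of_nat r \<noteq> (0::'k)"
    and "\<exists>\<zeta>::'k. \<zeta> ^ r = 1 \<and> (\<forall>m. 0 < m \<and> m < r \<longrightarrow> \<zeta> ^ m \<noteq> 1)"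
    and "lie_idempotent n r e"
    and "lie_idempotent n r e'"
  shows "SW_Lie n r e \<longleftrightarrow> SW_Lie n r e'"
proof -
  have "imgSym r (Lnr n r) (corner r e) = imgSym r (Lnr n r) (corner r e')"
    using img_sub[OF assms(4,5)] img_sub[OF assms(5,4)] by blast
  thus ?thesis by (simp add: SW_Lie_def)
qed

end
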